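(* Let $n\geqslant0$, $q=3^{2n+1}$, $A=\{\alpha-\alpha^{3^{n+1}}:\alpha\in\mathbb{F}_q\}$, and let $T\subseteq\mathbb{F}_q^\times$. Then $$\dim_{\mathbb{F}_3}\Big(\bigcap_{t\in T}tA\Big)+\dim_{\mathbb{F}_3}\big(\mathrm{span}_{\mathbb{F}_3}(T^{-1})\big)=2n+1.$$
   Context: For $t\in\mathbb{F}_q$, $tA=\{ta:a\in A\}$, an $\mathbb{F}_3$-subspace of $\mathbb{F}_q$; $T^{-1}=\{t^{-1}:t\in T\}$ and $\mathrm{span}_{\mathbb{F}_3}(T^{-1})$ is the $\mathbb{F}_3$-subspace it spans. An intersection over an empty index set is $\mathbb{F}_q$. *)

theory Defs
  imports Main
begin

definition F3_scalars :: "'a::field set" where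
  "F3_scalars = of_nat ` {0, 1, 2}"

definition f3_span :: "'a::field set \<Rightarrow> 'a set" where
  "f3_span S = {(\<Sum>s\<in>S'. c s * s) | S' c. finite S' \<and> S' \<subseteq> S \<and> (\<forall>s. c s \<in> F3_scalars)}"

definition f3_indep :: "'a::field set \<Rightarrow> bool" where
  "f3_indep B \<longleftrightarrow> (\<forall>S' c. finite S' \<and> S' \<subseteq> B \<and> (\<forall>s. c s \<in> F3_scalars) \<and>
       (\<Sum>s\<in>S'. c s * s) = 0 \<longrightarrow> (\<forall>s\<in>S'. c s = 0))"

definition f3_dim :: "'a::field set \<Rightarrow> nat" where
  "f3_dim V = (THE k. \<exists>B. finite B \<and> B \<subseteq> V \<and> f3_indep B \<and> f3_span B = V \<and> card B = k)"

end

theory Submission imports Defs "HOL-Number_Theory.Residues" "HOL-Computational_Algebra.Polynomial"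
begin

lemma F3_eq: "F3_scalars = {0, 1, 2::'a::field}"
  unfolding F3_scalars_def by auto

definition subsp :: "'a::field set \<Rightarrow> bool" where
  "subsp V \<longleftrightarrow> 0 \<in> V \<and> (\<forall>x\<in>V. \<forall>y\<in>V. x + y \<in> V)"

context
  assumes three: "(3::'a::{field,finite}) = 0"
begin

lemma two_two: "(2::'a) + 2 = 1"
proof -
  have "(2::'a) + 2 = 3 + 1" by simp
  thus ?thesis using three by simp
qed

lemma one_two: "(1::'a) + 2 = 0" "(2::'a) + 1 = 0"
proof -
  have "(1::'a) + 2 = 3" by simp
  thus "(1::'a) + 2 = 0" using three by simp
  thus "(2::'a) + 1 = 0" by (simp add: add.commute)
qed

lemma two_mult_two: "(2::'a) * 2 = 1"
  using two_two by (metis mult_2_right)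

lemma neg_one: "-(1::'a) = 2"
  using one_two by (metis add_eq_0_iff)

lemma neg_two: "-(2::'a) = 1"
  using neg_one by (metis minus_minus)

lemma two_ne0: "(2::'a) \<noteq> 0"
  using one_two(2) by force

lemma two_ne1: "(2::'a) \<noteq> 1"
proof
  assume "(2::'a) = 1"
  hence "(1::'a) + 1 = 1" using two_two by simp
  thus False by (metis add_cancel_right_right one_neq_zero)
qed

lemma neg_eq: "-(x::'a) = 2 * x"
proof -
  have "2 * x + x = (2 + 1) * x" by (simp add: distrib_right)
  hence "2 * x + x = 0" using one_two(2) by simp
  thus ?thesis by (simp add: eq_neg_iff_add_eq_0)
qed

lemma F3_add: "a \<in> {0,1,2::'a} \<Longrightarrow> b \<in> {0,1,2} \<Longrightarrow> a + b \<in> {0,1,2}"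
  using two_two one_two by auto

lemma F3_mult: "a \<in> {0,1,2::'a} \<Longrightarrow> b \<in> {0,1,2} \<Longrightarrow> a * b \<in> {0,1,2}"
  using two_mult_two by auto

lemma F3_neg: "a \<in> {0,1,2::'a} \<Longrightarrow> -a \<in> {0,1,2}"
  using neg_one neg_two by auto

lemma F3_inv: "a \<in> {0,1,2::'a} \<Longrightarrow> inverse a \<in> {0,1,2}"
  using two_mult_two by (auto simp: inverse_unique)

lemma card_F3: "card {0,1,2::'a} = 3"
  using two_ne0 two_ne1 by simp

lemma F3_cube: "a \<in> {0,1,2::'a} \<Longrightarrow> a ^ 3 = a"
  using two_mult_two by (auto simp: power3_eq_cube)

lemma cube_F3: "(y::'a) ^ 3 = y \<Longrightarrow> y \<in> {0,1,2}"
proof -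
  assume h: "y ^ 3 = y"
  have "y * (y - 1) * (y + 1) = y ^ 3 - y" by (simp add: power3_eq_cube algebra_simps)
  hence "y * (y - 1) * (y + 1) = 0" using h by simp
  hence "y = 0 \<or> y = 1 \<or> y = -1" by (auto simp: eq_neg_iff_add_eq_0)
  thus ?thesis using neg_one by auto
qed

lemma subsp_scal: "subsp V \<Longrightarrow> c \<in> {0,1,2::'a} \<Longrightarrow> x \<in> V \<Longrightarrow> c * x \<in> V"
proof -
  assume V: "subsp V" and c: "c \<in> {0,1,2::'a}" and x: "x \<in> V"
  have z: "0 \<in> V" and a: "x + x \<in> V" using V x unfolding subsp_def by blast+
  have "2 * x = x + x" by (rule mult_2)
  thus ?thesis using c z a x by auto
qed

lemma subsp_neg: "subsp V \<Longrightarrow> x \<in> V \<Longrightarrow> -(x::'a) \<in> V"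
proof -
  assume "subsp V" "x \<in> V"
  hence "2 * x \<in> V" using subsp_scal[of V 2 x] by simp
  thus ?thesis by (subst neg_eq)
qed

lemma span_memI: "finite S \<Longrightarrow> S \<subseteq> B \<Longrightarrow> \<forall>s. c s \<in> {0,1,2::'a} \<Longrightarrow> (\<Sum>s\<in>S. c s * s) \<in> f3_span B"
  unfolding f3_span_def F3_eq by blast

lemma span_memE:
  assumes "y \<in> f3_span (B::'a set)"
  obtains S c where "y = (\<Sum>s\<in>S. c s * s)" "finite S" "S \<subseteq> B" "\<forall>s. c s \<in> {0,1,2::'a}"
  using assms unfolding f3_span_def F3_eq by blast

lemma span_empty: "f3_span {} = {0::'a}"
proof (intro equalityI subsetI)
  fix y :: 'a assume "y \<in> f3_span {}"
  then obtain S c where "y = (\<Sum>s\<in>S. c s * s)" "S \<subseteq> {}" by (rule span_memE)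
  thus "y \<in> {0}" by simp
next
  fix y :: 'a assume "y \<in> {0}"
  hence "y = (\<Sum>s\<in>{}. (\<lambda>_. 0) s * s)" by simp
  thus "y \<in> f3_span {}" using span_memI[of "{}" "{}" "\<lambda>_. 0"] by simp
qed

lemma span_insert: "f3_span (insert v B) = {c * v + x | c x. c \<in> {0,1,2::'a} \<and> x \<in> f3_span B}"
proof (intro equalityI subsetI)
  fix y assume "y \<in> f3_span (insert v B)"
  then obtain S c where y: "y = (\<Sum>s\<in>S. c s * s)" and fin: "finite S" and sub: "S \<subseteq> insert v B"
    and cF: "\<forall>s. c s \<in> {0,1,2::'a}" by (rule span_memE)
  show "y \<in> {c * v + x | c x. c \<in> {0,1,2::'a} \<and> x \<in> f3_span B}"
  proof (cases "v \<in> S")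
    case True
    have "y = c v * v + (\<Sum>s\<in>S - {v}. c s * s)" using y fin True by (simp add: sum.remove)
    moreover have "(\<Sum>s\<in>S - {v}. c s * s) \<in> f3_span B"
      using fin sub cF by (intro span_memI) auto
    ultimately show ?thesis using cF by blast
  next
    case False
    have "y = 0 * v + y" by simp
    moreover have "y \<in> f3_span B" unfolding y using fin sub cF False by (intro span_memI) auto
    ultimately show ?thesis by blast
  qed
next
  fix y assume "y \<in> {c * v + x | c x. c \<in> {0,1,2::'a} \<and> x \<in> f3_span B}"
  then obtain c x where y: "y = c * v + x" and c: "c \<in> {0,1,2::'a}" and x: "x \<in> f3_span B" by blast
  from x obtain S d where x: "x = (\<Sum>s\<in>S. d s * s)" and fin: "finite S" and sub: "S \<subseteq> B"
    and dF: "\<forall>s. d s \<in> {0,1,2::'a}" by (rule span_memE)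
  show "y \<in> f3_span (insert v B)"
  proof (cases "v \<in> S")
    case True
    define d' where "d' = d(v := c + d v)"
    have d'F: "\<forall>s. d' s \<in> {0,1,2::'a}" unfolding d'_def using dF c F3_add by auto
    have "(\<Sum>s\<in>S. d' s * s) = d' v * v + (\<Sum>s\<in>S - {v}. d' s * s)" using fin True by (simp add: sum.remove)
    also have "(\<Sum>s\<in>S - {v}. d' s * s) = (\<Sum>s\<in>S - {v}. d s * s)" unfolding d'_def by (intro sum.cong) auto
    also have "d' v * v = c * v + d v * v" unfolding d'_def by (simp add: distrib_right)
    finally have e1: "(\<Sum>s\<in>S. d' s * s) = c * v + d v * v + (\<Sum>s\<in>S - {v}. d s * s)" .
    have e2: "(\<Sum>s\<in>S. d s * s) = d v * v + (\<Sum>s\<in>S - {v}. d s * s)" using fin True by (simp add: sum.remove)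
    have "(\<Sum>s\<in>S. d' s * s) = y" unfolding y x using e1 e2 by (simp add: add.assoc)
    moreover have "(\<Sum>s\<in>S. d' s * s) \<in> f3_span (insert v B)"
      using fin sub d'F by (intro span_memI) auto
    ultimately show ?thesis by simp
  next
    case False
    define d' where "d' = d(v := c)"
    have d'F: "\<forall>s. d' s \<in> {0,1,2::'a}" unfolding d'_def using dF c by auto
    have "(\<Sum>s\<in>insert v S. d' s * s) = d' v * v + (\<Sum>s\<in>S. d' s * s)" using fin False by simp
    also have "(\<Sum>s\<in>S. d' s * s) = (\<Sum>s\<in>S. d s * s)" unfolding d'_def using False by (intro sum.cong) auto
    finally have "(\<Sum>s\<in>insert v S. d' s * s) = y" unfolding y x d'_def by simp
    moreover have "(\<Sum>s\<in>insert v S. d' s * s) \<in> f3_span (insert v B)"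
      using fin sub d'F by (intro span_memI) auto
    ultimately show ?thesis by simp
  qed
qed

lemma subsp_span: "subsp (f3_span (B::'a set))"
proof -
  have "finite B" by simp
  thus ?thesis
  proof (induction B rule: finite_induct)
    case empty
    show ?case unfolding span_empty subsp_def by simp
  next
    case (insert v B)
    show ?case unfolding subsp_def span_insert
    proof (intro conjI ballI)
      have "(0::'a) = 0 * v + 0" by simp
      moreover have "(0::'a) \<in> f3_span B" using insert.IH unfolding subsp_def by blast
      ultimately show "(0::'a) \<in> {c * v + x | c x. c \<in> {0,1,2::'a} \<and> x \<in> f3_span B}" by blast
    next
      fix y z assume "y \<in> {c * v + x | c x. c \<in> {0,1,2::'a} \<and> x \<in> f3_span B}"
        "z \<in> {c * v + x | c x. c \<in> {0,1,2::'a} \<and> x \<in> f3_span B}"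
      then obtain c x c' x' where "y = c * v + x" "z = c' * v + x'" "c \<in> {0,1,2::'a}" "c' \<in> {0,1,2::'a}"
        "x \<in> f3_span B" "x' \<in> f3_span B" by blast
      moreover have "y + z = (c + c') * v + (x + x')" using calculation by (simp add: algebra_simps)
      moreover have "c + c' \<in> {0,1,2}" using calculation F3_add by blast
      moreover have "x + x' \<in> f3_span B" using calculation insert.IH unfolding subsp_def by blast
      ultimately show "y + z \<in> {c * v + x | c x. c \<in> {0,1,2::'a} \<and> x \<in> f3_span B}" by blast
    qed
  qed
qed

lemma span_least: "subsp V \<Longrightarrow> B \<subseteq> V \<Longrightarrow> f3_span (B::'a set) \<subseteq> V"
proof -
  assume V: "subsp V"
  have "finite B" by simp
  thus "B \<subseteq> V \<Longrightarrow> f3_span B \<subseteq> V"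
  proof (induction B rule: finite_induct)
    case empty
    thus ?case using V unfolding span_empty subsp_def by simp
  next
    case (insert v B)
    show ?case unfolding span_insert
    proof
      fix y assume "y \<in> {c * v + x | c x. c \<in> {0,1,2::'a} \<and> x \<in> f3_span B}"
      then obtain c x where "y = c * v + x" "c \<in> {0,1,2::'a}" "x \<in> f3_span B" by blast
      moreover have "c * v \<in> V" using calculation insert.prems V subsp_scal by blast
      moreover have "x \<in> V" using calculation insert by blast
      ultimately show "y \<in> V" using V unfolding subsp_def by blast
    qed
  qed
qed

lemma span_sup: "(B::'a set) \<subseteq> f3_span B"
proof -
  have "finite B" by simp
  thus ?thesis
  proof (induction B rule: finite_induct)
    case empty
    show ?case by simp
  next
    case (insert v B)
    have "(0::'a) \<in> f3_span B" using subsp_span unfolding subsp_def by blast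
    moreover have "v = 1 * v + 0" by simp
    ultimately have "v \<in> f3_span (insert v B)" unfolding span_insert by blast
    moreover have "b \<in> f3_span (insert v B)" if "b \<in> B" for b
    proof -
      have "b = 0 * v + b" by simp
      thus ?thesis unfolding span_insert using that insert.IH by blast
    qed
    ultimately show ?case by blast
  qed
qed

lemma indep_mono: "f3_indep B' \<Longrightarrow> B \<subseteq> B' \<Longrightarrow> f3_indep (B::'a set)"
  unfolding f3_indep_def by blast

lemma indep_empty: "f3_indep ({}::'a set)"
  unfolding f3_indep_def by blast

lemma indepD: "f3_indep B \<Longrightarrow> finite S \<Longrightarrow> S \<subseteq> B \<Longrightarrow> \<forall>s. c s \<in> {0,1,2::'a} \<Longrightarrow>
  (\<Sum>s\<in>S. c s * s) = 0 \<Longrightarrow> s \<in> S \<Longrightarrow> c s = (0::'a)"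
proof -
  assume h: "f3_indep B" and a: "finite S" "S \<subseteq> B" "\<forall>s. c s \<in> {0,1,2::'a}" "(\<Sum>s\<in>S. c s * s) = 0" "s \<in> S"
  have "\<forall>s. c s \<in> F3_scalars" using a(3) F3_eq by blast
  hence "finite S \<and> S \<subseteq> B \<and> (\<forall>s. c s \<in> F3_scalars) \<and> (\<Sum>s\<in>S. c s * s) = 0" using a by blast
  hence "\<forall>s\<in>S. c s = 0" using h unfolding f3_indep_def by blast
  thus ?thesis using a by blast
qed

lemma indep_insert:
  assumes vB: "v \<notin> B"
  shows "f3_indep (insert v (B::'a set)) \<longleftrightarrow> f3_indep B \<and> v \<notin> f3_span B"
proof
  assume ind: "f3_indep (insert v B)"
  have "f3_indep B" using ind indep_mono by blast
  moreover have "v \<notin> f3_span B"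
  proof
    assume "v \<in> f3_span B"
    then obtain S c where v: "v = (\<Sum>s\<in>S. c s * s)" and fin: "finite S" and sub: "S \<subseteq> B"
      and cF: "\<forall>s. c s \<in> {0,1,2::'a}" by (rule span_memE)
    define d where "d = c(v := 2)"
    have dF: "\<forall>s. d s \<in> {0,1,2::'a}" unfolding d_def using cF by auto
    have vS: "v \<notin> S" using sub vB by blast
    have "(\<Sum>s\<in>insert v S. d s * s) = d v * v + (\<Sum>s\<in>S. d s * s)" using fin vS by simp
    also have "(\<Sum>s\<in>S. d s * s) = (\<Sum>s\<in>S. c s * s)" unfolding d_def using vS by (intro sum.cong) auto
    also have "d v * v + (\<Sum>s\<in>S. c s * s) = 2 * v + v" unfolding d_def v[symmetric] by simp
    also have "2 * v + v = 0" using neg_eq[of v] by (metis add.left_inverse)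
    finally have "(\<Sum>s\<in>insert v S. d s * s) = 0" .
    hence "d v = 0" using indepD[OF ind, of "insert v S" d v] fin sub dF by blast
    thus False unfolding d_def using two_ne0 by simp
  qed
  ultimately show "f3_indep B \<and> v \<notin> f3_span B" by blast
next
  assume h: "f3_indep B \<and> v \<notin> f3_span B"
  show "f3_indep (insert v B)" unfolding f3_indep_def F3_eq
  proof (intro allI impI ballI)
    fix S c s
    assume H: "finite S \<and> S \<subseteq> insert v B \<and> (\<forall>s. c s \<in> {0,1,2::'a}) \<and> (\<Sum>s\<in>S. c s * s) = 0"
      and sS: "s \<in> S"
    hence fin: "finite S" and sub: "S \<subseteq> insert v B" and cF: "\<forall>s. c s \<in> {0,1,2::'a}"
      and sum0: "(\<Sum>s\<in>S. c s * s) = 0" by blast+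
    show "c s = 0"
    proof (cases "v \<in> S")
      case False
      hence "S \<subseteq> B" using sub by blast
      thus ?thesis using h fin cF sum0 sS indepD[of B S c s] by blast
    next
      case True
      have split: "c v * v + (\<Sum>s\<in>S - {v}. c s * s) = 0" using sum0 fin True by (simp add: sum.remove)
      have subB: "S - {v} \<subseteq> B" using sub by blast
      have cv: "c v = 0"
      proof (rule ccontr)
        assume nz: "c v \<noteq> 0"
        define e where "e = - inverse (c v)"
        have eF: "e \<in> {0,1,2}" unfolding e_def using cF F3_inv F3_neg by blast
        have cvv: "c v * v = - (\<Sum>s\<in>S - {v}. c s * s)" using split by (metis eq_neg_iff_add_eq_0)
        have "v = inverse (c v) * (c v * v)" using nz by simp
        also have "\<dots> = e * (\<Sum>s\<in>S - {v}. c s * s)" unfolding e_def cvv by simp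
        also have "\<dots> = (\<Sum>s\<in>S - {v}. (e * c s) * s)" by (simp add: sum_distrib_left mult.assoc)
        finally have "v \<in> f3_span B" using span_memI[of "S - {v}" B "\<lambda>s. e * c s"] fin subB cF eF F3_mult
          by auto
        thus False using h by blast
      qed
      have "(\<Sum>s\<in>S - {v}. c s * s) = 0" using split cv by simp
      thus ?thesis using h fin subB cF cv sS indepD[of B "S - {v}" c s] by blast
    qed
  qed
qed

lemma card_span: "f3_indep (B::'a set) \<Longrightarrow> card (f3_span B) = 3 ^ card B"
proof -
  have "finite B" by simp
  thus "f3_indep B \<Longrightarrow> card (f3_span B) = 3 ^ card B"
  proof (induction B rule: finite_induct)
    case empty
    show ?case unfolding span_empty by simp
  next
    case (insert v B)
    have iB: "f3_indep B" and vsp: "v \<notin> f3_span B" using insert.prems indep_insert[OF insert.hyps(2)] by blast+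
    have eq: "f3_span (insert v B) = (\<lambda>p. fst p * v + snd p) ` ({0,1,2::'a} \<times> f3_span B)"
      unfolding span_insert by force
    have inj: "inj_on (\<lambda>p. fst p * v + snd p) ({0,1,2::'a} \<times> f3_span B)"
    proof (rule inj_onI)
      fix p p' assume p: "p \<in> {0,1,2::'a} \<times> f3_span B" and p': "p' \<in> {0,1,2::'a} \<times> f3_span B"
        and e: "fst p * v + snd p = fst p' * v + snd p'"
      obtain c x where pc: "p = (c, x)" by force
      obtain c' x' where pc': "p' = (c', x')" by force
      have c: "c \<in> {0,1,2}" and x: "x \<in> f3_span B" using p pc by auto
      have c': "c' \<in> {0,1,2}" and x': "x' \<in> f3_span B" using p' pc' by auto
      have e': "c * v + x = c' * v + x'" using e pc pc' by simp
      have "c = c'"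
      proof (rule ccontr)
        assume ne: "c \<noteq> c'"
        have d: "(c + - c') * v = x' + - x" using e' by (simp add: algebra_simps)
        have dF: "c + - c' \<in> {0,1,2}" using c c' F3_add F3_neg by blast
        have dnz: "c + - c' \<noteq> 0" using ne by (simp add: add_eq_0_iff)
        have "v = inverse (c + - c') * ((c + - c') * v)" using dnz by simp
        also have "\<dots> = inverse (c + - c') * (x' + - x)" unfolding d ..
        finally have "v = inverse (c + - c') * (x' + - x)" .
        moreover have "x' + - x \<in> f3_span B" using subsp_span subsp_neg x x' unfolding subsp_def by blast
        moreover have "inverse (c + - c') \<in> {0,1,2}" using dF F3_inv by blast
        ultimately have "v \<in> f3_span B" using subsp_scal subsp_span by metis
        thus False using vsp by blast
      qed
      thus "p = p'" using e' pc pc' by simp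
    qed
    have "card (f3_span (insert v B)) = card ({0,1,2::'a} \<times> f3_span B)"
      unfolding eq by (rule card_image[OF inj])
    also have "\<dots> = 3 * card (f3_span B)" using card_F3 by (simp add: card_cartesian_product)
    also have "\<dots> = 3 ^ card (insert v B)" using insert.IH iB insert.hyps by simp
    finally show ?case .
  qed
qed

lemma basis_ext:
  assumes V: "subsp V" and B0V: "B0 \<subseteq> V" and i0: "f3_indep (B0::'a set)"
  shows "\<exists>B. B0 \<subseteq> B \<and> B \<subseteq> V \<and> f3_indep B \<and> f3_span B = V"
  using B0V i0
proof (induction "card V - card B0" arbitrary: B0 rule: less_induct)
  case less
  show ?case
  proof (cases "f3_span B0 = V")
    case True
    thus ?thesis using less.prems by blast
  next
    case False
    have "f3_span B0 \<subseteq> V" using span_least V less.prems by blast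
    then obtain v where v: "v \<in> V" "v \<notin> f3_span B0" using False by blast
    have vB: "v \<notin> B0" using v span_sup by blast
    have i1: "f3_indep (insert v B0)" using indep_insert[OF vB] less.prems v by blast
    have s1: "insert v B0 \<subseteq> V" using v less.prems by blast
    have "card (insert v B0) \<le> card V" using s1 by (simp add: card_mono)
    hence "card V - card (insert v B0) < card V - card B0" using vB by simp
    from less.hyps[OF this s1 i1] show ?thesis by blast
  qed
qed

lemma dim_eq:
  assumes V: "subsp V" and cV: "card V = 3 ^ k"
  shows "f3_dim (V::'a set) = k"
  unfolding f3_dim_def
proof (rule the_equality)
  obtain B where B: "B \<subseteq> V" "f3_indep B" "f3_span B = V"
    using basis_ext[OF V _ indep_empty] by blast
  have "card B = k" using card_span[OF B(2)] B(3) cV by (simp add: power_inject_exp)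
  thus "\<exists>B. finite B \<and> B \<subseteq> V \<and> f3_indep B \<and> f3_span B = V \<and> card B = k" using B by auto
next
  fix k' assume "\<exists>B. finite B \<and> B \<subseteq> V \<and> f3_indep B \<and> f3_span B = V \<and> card B = k'"
  then obtain B where B: "f3_indep B" "f3_span B = V" "card B = k'" by blast
  show "k' = k" using card_span[OF B(1)] B cV by (simp add: power_inject_exp)
qed

lemma frob3: "(x + y) ^ 3 = x ^ 3 + (y::'a) ^ 3"
proof -
  have "(x + y) ^ 3 = x ^ 3 + y ^ 3 + 3 * (x * x * y + x * y * y)"
    by (simp add: power3_eq_cube algebra_simps)
  thus ?thesis using three by simp
qed

lemma pow3_Suc: "(a::'b::monoid_mult) ^ (3 ^ Suc k) = (a ^ (3 ^ k)) ^ 3"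
  by (metis power_Suc2 power_mult)

lemma frob: "(x + y) ^ (3 ^ k) = x ^ (3 ^ k) + (y::'a) ^ (3 ^ k)"
proof (induction k)
  case 0 thus ?case by simp
next
  case (Suc k) thus ?case by (simp only: pow3_Suc) (simp add: frob3)
qed

lemma frob_sum: "(\<Sum>i\<in>I. f i) ^ (3 ^ k) = (\<Sum>i\<in>I. (f i :: 'a) ^ (3 ^ k))"
proof (cases "finite I")
  case True
  thus ?thesis by (induction I rule: finite_induct) (simp_all add: frob)
next
  case False
  thus ?thesis by simp
qed

lemma F3_pow: "c \<in> {0,1,2::'a} \<Longrightarrow> c ^ (3 ^ k) = c"
proof (induction k)
  case 0 thus ?case by simp
next
  case (Suc k)
  hence "c ^ (3 ^ k) = c" by simp
  hence "c ^ (3 ^ Suc k) = c ^ 3" by (simp only: pow3_Suc)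
  thus ?case using F3_cube Suc.prems by simp
qed

context
  fixes m :: nat
  assumes cardq: "card (UNIV :: 'a set) = 3 ^ m"
begin

lemma fermat: "(x::'a) ^ (3 ^ m) = x"
proof (cases "x = 0")
  case True thus ?thesis by simp
next
  case False
  define U where "U = (UNIV :: 'a set) - {0}"
  have inj: "inj_on (\<lambda>u. x * u) U" using False by (auto intro: inj_onI)
  have im: "(\<lambda>u. x * u) ` U = U"
  proof
    show "(\<lambda>u. x * u) ` U \<subseteq> U" unfolding U_def using False by auto
    show "U \<subseteq> (\<lambda>u. x * u) ` U"
    proof
      fix u assume "u \<in> U"
      hence "u = x * (u / x)" "u / x \<in> U" unfolding U_def using False by auto
      thus "u \<in> (\<lambda>u. x * u) ` U" by blast
    qed
  qed
  have "prod (\<lambda>u. u) U = prod (\<lambda>u. u) ((\<lambda>u. x * u) ` U)" using im by simp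
  also have "\<dots> = prod (\<lambda>u. x * u) U" using prod.reindex[OF inj, of "\<lambda>u. u"] by (simp add: comp_def)
  also have "\<dots> = x ^ card U * prod (\<lambda>u. u) U" by (simp add: prod.distrib)
  finally have e: "prod (\<lambda>u. u) U = x ^ card U * prod (\<lambda>u. u) U" .
  have "prod (\<lambda>u. u) U \<noteq> 0" unfolding U_def by simp
  hence x1: "x ^ card U = 1" using e by simp
  have "card U = 3 ^ m - 1" unfolding U_def using cardq by (simp add: card_Diff_singleton)
  hence "3 ^ m = Suc (card U)" by simp
  hence "x ^ (3 ^ m) = x * x ^ card U" by simp
  thus ?thesis using x1 by simp
qed

definition tr :: "'a \<Rightarrow> 'a" where
  "tr x = (\<Sum>i<m. x ^ (3 ^ i))"

lemma tr_add: "tr (x + y) = tr x + tr y"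
  unfolding tr_def by (simp add: frob sum.distrib)

lemma tr_zero: "tr 0 = 0"
  unfolding tr_def by (simp add: power_0_left)

lemma tr_neg: "tr (- x) = - tr x"
  using tr_add[of x "-x"] tr_zero by (simp add: add_eq_0_iff)

lemma tr_diff: "tr (x - y) = tr x - tr y"
  using tr_add[of x "-y"] tr_neg[of y] by simp

lemma tr_cube: "tr (x ^ 3) = tr x"
proof -
  define f where "f i = x ^ (3 ^ i)" for i
  have "tr (x ^ 3) = (\<Sum>i<m. f (Suc i))" unfolding tr_def f_def
    by (intro sum.cong) (simp_all add: power_mult[symmetric] mult.commute)
  moreover have "(\<Sum>i<Suc m. f i) = f 0 + (\<Sum>i<m. f (Suc i))" by (rule sum.lessThan_Suc_shift)
  moreover have "(\<Sum>i<Suc m. f i) = (\<Sum>i<m. f i) + f m" by simp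
  moreover have "f m = f 0" unfolding f_def using fermat by simp
  ultimately show ?thesis unfolding tr_def f_def[symmetric] by (simp add: add.commute)
qed

lemma tr_pow: "tr (x ^ (3 ^ k)) = tr x"
proof (induction k)
  case 0 thus ?case by (simp add: tr_cube)
next
  case (Suc k) thus ?case by (simp only: pow3_Suc tr_cube)
qed

lemma tr_cube_val: "(tr x) ^ 3 = tr x"
proof -
  have "(tr x) ^ 3 = (tr x) ^ (3 ^ 1)" by simp
  also have "\<dots> = (\<Sum>i<m. (x ^ (3 ^ i)) ^ (3 ^ 1))" unfolding tr_def by (rule frob_sum)
  also have "\<dots> = (\<Sum>i<m. (x ^ 3) ^ (3 ^ i))"
    by (intro sum.cong) (simp_all add: power_mult[symmetric] mult.commute)
  also have "\<dots> = tr (x ^ 3)" unfolding tr_def ..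
  finally show ?thesis using tr_cube by simp
qed

lemma tr_F3: "tr x \<in> {0,1,2}"
  using cube_F3 tr_cube_val by blast

lemma tr_scal: "c \<in> {0,1,2} \<Longrightarrow> tr (c * x) = c * tr x"
proof -
  assume "c \<in> {0,1,2}"
  moreover have "tr (2 * x) = 2 * tr x"
  proof -
    have "tr (2 * x) = tr (x + x)" by (subst mult_2) (rule refl)
    also have "\<dots> = tr x + tr x" by (rule tr_add)
    also have "\<dots> = 2 * tr x" by (subst mult_2) (rule refl)
    finally show ?thesis .
  qed
  ultimately show ?thesis using tr_zero by auto
qed


lemma m_pos: "m \<noteq> 0"
proof
  assume "m = 0"
  hence "card (UNIV :: 'a set) = 1" using cardq by simp
  moreover have "card {0, 1::'a} \<le> card (UNIV :: 'a set)" by (rule card_mono) auto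
  ultimately show False by simp
qed

lemma tr_nonzero: "\<exists>x. tr x \<noteq> 0"
proof -
  define P where "P = (\<Sum>i<m. monom (1::'a) (3 ^ i))"
  have ev: "poly P x = tr x" for x unfolding P_def tr_def by (simp add: poly_sum poly_monom)
  have "coeff P (3 ^ (m - 1)) = (\<Sum>i<m. if i = m - 1 then 1 else 0)"
    unfolding P_def coeff_sum coeff_monom by (intro sum.cong) (simp_all add: power_inject_exp)
  also have "\<dots> = 1" using m_pos by simp
  finally have c1: "coeff P (3 ^ (m - 1)) = 1" .
  hence Pnz: "P \<noteq> 0" by auto
  have "\<forall>j>3 ^ (m - 1). coeff P j = 0"
  proof (intro allI impI)
    fix j :: nat assume j: "j > 3 ^ (m - 1)"
    have "3 ^ i \<noteq> j" if "i < m" for i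
    proof -
      have "(3::nat) ^ i \<le> 3 ^ (m - 1)" using that by (intro power_increasing) auto
      thus ?thesis using j by linarith
    qed
    thus "coeff P j = 0" unfolding P_def coeff_sum coeff_monom by (intro sum.neutral) auto
  qed
  hence "degree P \<le> 3 ^ (m - 1)" by (rule degree_le)
  moreover have "card {x. poly P x = 0} \<le> degree P" by (rule card_poly_roots_bound[OF Pnz])
  moreover have "(3::nat) ^ (m - 1) < 3 ^ m" using m_pos by (intro power_strict_increasing) auto
  ultimately have "card {x. poly P x = 0} < card (UNIV :: 'a set)" using cardq by linarith
  hence "{x. poly P x = 0} \<noteq> UNIV" by auto
  thus ?thesis using ev by auto
qed

lemma tr_range: "range tr = {0,1,2}"
proof
  show "range tr \<subseteq> {0,1,2}" using tr_F3 by blast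
  obtain x where x: "tr x \<noteq> 0" using tr_nonzero by blast
  have r: "tr (x + x) = tr x + tr x" by (rule tr_add)
  have "tr x = 1 \<or> tr x = 2" using x tr_F3[of x] by blast
  moreover have "0 \<in> range tr" using tr_zero by (metis rangeI)
  moreover have "tr x \<in> range tr" "tr (x + x) \<in> range tr" by auto
  ultimately show "{0,1,2} \<subseteq> range tr" using r two_two by (auto simp del: one_add_one)
qed

lemma nondeg: "x \<noteq> 0 \<Longrightarrow> \<exists>z. tr (x * z) \<noteq> 0"
proof -
  assume x: "x \<noteq> 0"
  obtain w where w: "tr w \<noteq> 0" using tr_nonzero by blast
  have "x * (w / x) = w" using x by simp
  thus ?thesis using w by metis
qed

definition perp :: "'a set \<Rightarrow> 'a set" where
  "perp S = {x. \<forall>s\<in>S. tr (x * s) = 0}"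

lemma subsp_ann: "subsp {s. tr (x * s) = 0}"
  unfolding subsp_def by (simp add: tr_zero distrib_left tr_add)

lemma subsp_perp: "subsp (perp S)"
  unfolding subsp_def perp_def by (simp add: tr_zero distrib_right tr_add)

lemma perp_span: "perp (f3_span S) = perp S"
proof
  show "perp (f3_span S) \<subseteq> perp S" using span_sup[of S] unfolding perp_def by blast
  show "perp S \<subseteq> perp (f3_span S)"
  proof
    fix x assume "x \<in> perp S"
    hence "S \<subseteq> {s. tr (x * s) = 0}" unfolding perp_def by blast
    hence "f3_span S \<subseteq> {s. tr (x * s) = 0}" using span_least subsp_ann by blast
    thus "x \<in> perp (f3_span S)" unfolding perp_def by blast
  qed
qed

lemma card_fibers:
  fixes f :: "'a \<Rightarrow> 'a"
  assumes add: "\<And>x y. f (x + y) = f x + f y"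
  shows "card (UNIV :: 'a set) = card (range f) * card {x. f x = 0}"
proof -
  have "f 0 = f 0 + f 0" using add[of 0 0] by simp
  hence f0: "f 0 = 0" using add_cancel_right_right[of "f 0" "f 0"] by blast
  have fd: "f (x - y) = f x - f y" for x y
    using add[of y "x - y"] by (simp add: algebra_simps)
  have fib: "card {x. f x = y} = card {x. f x = 0}" if yr: "y \<in> range f" for y
  proof -
    obtain x0 where y: "y = f x0" using yr by blast
    have "{x. f x = y} = (\<lambda>k. x0 + k) ` {x. f x = 0}"
    proof (intro equalityI subsetI)
      fix x assume "x \<in> {x. f x = y}"
      hence "f (x - x0) = 0" "x = x0 + (x - x0)" using fd y by simp_all
      thus "x \<in> (\<lambda>k. x0 + k) ` {x. f x = 0}" by blast
    next
      fix x assume "x \<in> (\<lambda>k. x0 + k) ` {x. f x = 0}"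
      thus "x \<in> {x. f x = y}" using add y by auto
    qed
    moreover have "inj_on (\<lambda>k. x0 + k) {x. f x = 0}" by (auto intro: inj_onI)
    ultimately show ?thesis by (simp add: card_image)
  qed
  have "UNIV = (\<Union>y\<in>range f. {x. f x = y})" by blast
  hence "card (UNIV :: 'a set) = card (\<Union>y\<in>range f. {x. f x = y})" by simp
  also have "\<dots> = (\<Sum>y\<in>range f. card {x. f x = y})" by (intro card_UN_disjoint) auto
  also have "\<dots> = (\<Sum>y\<in>range f. card {x. f x = 0})" using fib by (intro sum.cong) auto
  also have "\<dots> = card (range f) * card {x. f x = 0}" by simp
  finally show ?thesis .
qed

lemma card_ker_tr: "3 * card {x. tr x = 0} = 3 ^ m"
  using card_fibers[of tr] tr_add tr_range card_F3 cardq by simp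

lemma card_perp:
  assumes S: "subsp S"
  shows "\<exists>d. d \<le> m \<and> card S = 3 ^ d \<and> card (perp S) = 3 ^ (m - d)"
proof -
  obtain BS where BS: "BS \<subseteq> S" "f3_indep BS" "f3_span BS = S"
    using basis_ext[OF S _ indep_empty] by blast
  have sU: "subsp (UNIV :: 'a set)" unfolding subsp_def by simp
  obtain B where B: "BS \<subseteq> B" "f3_indep B" "f3_span B = UNIV"
    using basis_ext[OF sU _ BS(2)] by blast
  have cB: "card B = m" using card_span[OF B(2)] B(3) cardq by (simp add: power_inject_exp)
  define d where "d = card BS"
  have dm: "d \<le> m" unfolding d_def using card_mono[of B BS] B(1) cB by simp
  have cS: "card S = 3 ^ d" unfolding d_def using card_span[OF BS(2)] BS(3) by simp
  define \<Psi> where "\<Psi> x = restrict (\<lambda>b. tr (x * b)) B" for x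
  define E where "E = PiE B (\<lambda>_. {0,1,2::'a})"
  have PsiE: "\<Psi> x \<in> E" for x unfolding \<Psi>_def E_def using tr_F3 by auto
  have inj: "inj \<Psi>"
  proof (rule injI)
    fix x y assume e: "\<Psi> x = \<Psi> y"
    have "\<forall>b\<in>B. tr ((x - y) * b) = 0"
    proof
      fix b assume b: "b \<in> B"
      have "tr (x * b) = tr (y * b)" using fun_cong[OF e, of b] b unfolding \<Psi>_def by simp
      thus "tr ((x - y) * b) = 0" by (simp add: left_diff_distrib tr_diff)
    qed
    hence "x - y \<in> perp B" unfolding perp_def by blast
    hence "x - y \<in> perp UNIV" using perp_span[of B] B(3) by simp
    hence "\<forall>z. tr ((x - y) * z) = 0" unfolding perp_def by blast
    thus "x = y" using nondeg[of "x - y"] by auto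
  qed
  have cE: "card E = 3 ^ m" unfolding E_def using card_F3 cB by (simp add: card_PiE)
  have imE: "range \<Psi> = E"
  proof (rule card_subset_eq)
    show "finite E" unfolding E_def by (simp add: finite_PiE)
    show "range \<Psi> \<subseteq> E" using PsiE by blast
    show "card (range \<Psi>) = card E" using card_image[OF inj] cardq cE by simp
  qed
  define E0 where "E0 = PiE B (\<lambda>b. if b \<in> BS then {0} else {0,1,2::'a})"
  have "card E0 = (\<Prod>b\<in>B. card (if b \<in> BS then {0} else {0,1,2::'a}))"
    unfolding E0_def by (simp add: card_PiE)
  also have "\<dots> = (\<Prod>b\<in>B. if b \<in> BS then 1 else 3)"
    using card_F3 by (intro prod.cong) auto
  also have "\<dots> = (\<Prod>b\<in>B \<inter> {x. x \<in> BS}. 1) * (\<Prod>b\<in>B \<inter> - {x. x \<in> BS}. 3)"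
    by (rule prod.If_cases) simp
  also have "\<dots> = 3 ^ card (B - BS)" by (simp add: Diff_eq)
  also have "card (B - BS) = m - d" unfolding d_def using B(1) cB by (simp add: card_Diff_subset)
  finally have cE0: "card E0 = 3 ^ (m - d)" .
  have pS: "perp S = {x. \<forall>b\<in>BS. tr (x * b) = 0}" using perp_span[of BS] BS(3) unfolding perp_def by simp
  have "\<Psi> ` perp S = E0"
  proof (intro equalityI subsetI)
    fix g assume "g \<in> \<Psi> ` perp S"
    then obtain x where x: "x \<in> perp S" "g = \<Psi> x" by blast
    show "g \<in> E0" unfolding E0_def x(2) \<Psi>_def using x(1) pS tr_F3 B(1) by auto
  next
    fix g assume g: "g \<in> E0"
    hence "g \<in> E" unfolding E0_def E_def by (auto simp: PiE_iff split: if_splits)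
    then obtain x where x: "g = \<Psi> x" using imE by blast
    have "\<forall>b\<in>BS. tr (x * b) = 0"
    proof
      fix b assume b: "b \<in> BS"
      have bB: "b \<in> B" using B(1) b by blast
      have gE0: "g \<in> PiE B (\<lambda>b. if b \<in> BS then {0} else {0,1,2::'a})" using g unfolding E0_def .
      have "g b \<in> (if b \<in> BS then {0} else {0,1,2::'a})" by (rule PiE_mem[OF gE0 bB])
      hence "g b = 0" using b by simp
      thus "tr (x * b) = 0" using b B(1) unfolding x \<Psi>_def by auto
    qed
    hence "x \<in> perp S" using pS by simp
    thus "g \<in> \<Psi> ` perp S" unfolding x by (rule imageI)
  qed
  moreover have "card (\<Psi> ` perp S) = card (perp S)" by (rule card_image[OF inj_on_subset[OF inj]]) simp
  ultimately have "card (perp S) = card E0" by simp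
  thus ?thesis using cE0 cS dm by (intro exI[of _ d]) simp
qed

lemma A_eq:
  assumes mn: "m = 2 * n + 1"
  shows "{\<alpha> - \<alpha> ^ (3 ^ (n + 1)) | \<alpha>. True} = {x::'a. tr x = 0}"
proof -
  define \<phi> where "\<phi> \<alpha> = \<alpha> - \<alpha> ^ (3 ^ (n + 1))" for \<alpha> :: 'a
  have add: "\<phi> (x + y) = \<phi> x + \<phi> y" for x y unfolding \<phi>_def frob by (simp add: algebra_simps)
  have ker: "{x. \<phi> x = 0} = {0,1,2}"
  proof (intro equalityI subsetI)
    fix a assume "a \<in> {x. \<phi> x = 0}"
    hence a: "a ^ (3 ^ (n + 1)) = a" unfolding \<phi>_def by simp
    have e1: "a ^ (3 ^ (n + 1) * 3 ^ (n + 1)) = a" unfolding power_mult a a ..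
    have e2: "(3::nat) ^ (n + 1) * 3 ^ (n + 1) = 3 ^ Suc m" unfolding mn by (simp add: power_add[symmetric])
    have e3: "a ^ (3 ^ Suc m) = a ^ 3" by (simp only: pow3_Suc fermat)
    have "a ^ (3 ^ Suc m) = a" using e1 unfolding e2 .
    hence "a ^ 3 = a" using e3 by simp
    thus "a \<in> {0,1,2}" by (rule cube_F3)
  next
    fix a assume "a \<in> {0,1,2::'a}"
    hence "a ^ (3 ^ (n + 1)) = a" by (rule F3_pow)
    thus "a \<in> {x. \<phi> x = 0}" unfolding \<phi>_def by simp
  qed
  have c1: "card (UNIV :: 'a set) = card (range \<phi>) * 3" using card_fibers[of \<phi>, OF add] ker card_F3 by simp
  have sub: "range \<phi> \<subseteq> {x. tr x = 0}"
  proof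
    fix y assume "y \<in> range \<phi>"
    then obtain a where y: "y = \<phi> a" by blast
    have "tr (a ^ (3 ^ (n + 1))) = tr a" by (rule tr_pow)
    thus "y \<in> {x. tr x = 0}" unfolding y \<phi>_def by (simp add: tr_diff)
  qed
  have "range \<phi> = {x. tr x = 0}"
  proof (rule card_subset_eq)
    show "finite {x. tr x = 0}" by simp
    show "range \<phi> \<subseteq> {x. tr x = 0}" by (rule sub)
    show "card (range \<phi>) = card {x. tr x = 0}" using c1 card_ker_tr cardq by simp
  qed
  moreover have "{\<alpha> - \<alpha> ^ (3 ^ (n + 1)) | \<alpha>. True} = range \<phi>" unfolding \<phi>_def by auto
  ultimately show ?thesis by simp
qed

end
end

lemma char3_of_card:
  assumes card_q: "card (UNIV :: 'a::{field,finite} set) = 3 ^ k"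
  shows "(3::'a) = 0"
proof -
  have pos: "CHAR('a) > 0" by (rule finite_imp_CHAR_pos) simp
  have pr: "prime CHAR('a)" by (rule prime_CHAR_semidom[OF pos])
  have "CHAR('a) dvd 3 ^ k" using CHAR_dvd_CARD[where 'a='a] card_q by simp
  hence "CHAR('a) dvd 3" using pr prime_dvd_power by blast
  hence "CHAR('a) = 3" using pr by (simp add: primes_dvd_imp_eq)
  hence "of_nat 3 = (0::'a)" using of_nat_CHAR[where 'a='a] by metis
  thus ?thesis by simp
qed

theorem lemma4p2:
  fixes n :: nat and T :: "'a::{field, finite} set"
  assumes card_q: "card (UNIV :: 'a set) = 3 ^ (2 * n + 1)"
    and T_units: "T \<subseteq> UNIV - {0}"
  defines "A \<equiv> {\<alpha> - \<alpha> ^ (3 ^ (n + 1)) | \<alpha>. True}"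
  shows "f3_dim (\<Inter>t\<in>T. (\<lambda>a. t * a) ` A) + f3_dim (f3_span (inverse ` T)) = 2 * n + 1"
proof -
  define m where "m = 2 * n + 1"
  have three: "(3::'a) = 0" by (rule char3_of_card[OF card_q])
  have cq: "card (UNIV :: 'a set) = 3 ^ m" using card_q m_def by simp
  have Aeq: "A = {x. tr m x = 0}" unfolding A_def by (rule A_eq[OF three cq m_def])
  have W: "(\<Inter>t\<in>T. (\<lambda>a. t * a) ` A) = perp m (inverse ` T)"
  proof (intro equalityI subsetI)
    fix x assume x: "x \<in> (\<Inter>t\<in>T. (\<lambda>a. t * a) ` A)"
    have "tr m (x * s) = 0" if s: "s \<in> inverse ` T" for s
    proof -
      obtain t where t: "t \<in> T" "s = inverse t" using s by blast
      have "t \<noteq> 0" using t T_units by blast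
      obtain a where a: "a \<in> A" "x = t * a" using x t by blast
      have "x * s = a" using a t \<open>t \<noteq> 0\<close> by (simp add: field_simps)
      hence "x * s \<in> A" using a(1) by simp
      thus ?thesis using Aeq by simp
    qed
    thus "x \<in> perp m (inverse ` T)" unfolding perp_def[OF three cq] by blast
  next
    fix x assume x: "x \<in> perp m (inverse ` T)"
    show "x \<in> (\<Inter>t\<in>T. (\<lambda>a. t * a) ` A)"
    proof
      fix t assume t: "t \<in> T"
      have "t \<noteq> 0" using t T_units by blast
      have "tr m (x * inverse t) = 0" using x t unfolding perp_def[OF three cq] by blast
      hence "x * inverse t \<in> A" using Aeq by simp
      moreover have "x = t * (x * inverse t)" using \<open>t \<noteq> 0\<close> by (simp add: field_simps)
      ultimately show "x \<in> (\<lambda>a. t * a) ` A" by blast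
    qed
  qed
  define S where "S = f3_span (inverse ` T)"
  have W2: "(\<Inter>t\<in>T. (\<lambda>a. t * a) ` A) = perp m S" unfolding W S_def perp_span[OF three cq] ..
  have sS: "subsp S" unfolding S_def by (rule subsp_span[OF three])
  obtain d where d: "d \<le> m" "card S = 3 ^ d" "card (perp m S) = 3 ^ (m - d)"
    using card_perp[OF three cq sS] by blast
  have "f3_dim (perp m S) = m - d" by (rule dim_eq[OF three subsp_perp[OF three cq] d(3)])
  moreover have "f3_dim S = d" by (rule dim_eq[OF three sS d(2)])
  ultimately show ?thesis unfolding W2 S_def[symmetric] m_def[symmetric] using d(1) by simp
qed

end
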